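(* Let $\{\mathcal G,(\Gamma_0,\Gamma_1),(\widetilde\Gamma_0,\widetilde\Gamma_1)\}$ be a triple for the adjoint pair $\{S,\widetilde S\}$ satisfying (G), (D), (M), with $\rho(A_0)\neq\emptyset$, $\gamma$-fields $\gamma,\widetilde\gamma$ and Weyl functions $M,\widetilde M$. Let $B_1,B_2,B_1',B_2'$ be linear operators in $\mathcal G$ such that $(B_1B_2\varphi,\psi)=(\varphi,B_1'B_2'\psi)$ for all $\varphi\in\operatorname{dom}(B_1B_2)$, $\psi\in\operatorname{dom}(B_1'B_2')$. Suppose there is $\lambda\in\rho(A_0)$ such that for every $f\in\mathfrak H$: $\widetilde\gamma(\overline\lambda)^*f\in\operatorname{dom}B_2$ and $B_2\widetilde\gamma(\overline\lambda)^*f\in\operatorname{ran}(I-B_2M(\lambda)B_1)$; and for every $g\in\mathfrak H$: $\gamma(\lambda)^*g\in\operatorname{dom}B_2'$ and $B_2'\gamma(\lambda)^*g\in\operatorname{ran}(I-B_2'\widetilde M(\overline\lambda)B_1')$. Then $A_{B_1B_2}=(\widetilde A_{B_1'B_2'})^*$; in particular $A_{B_1B_2}$ is a closed operator in $\mathfrak H$ with $\lambda\in\rho(A_{B_1B_2})$.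
   Context: Let $\mathfrak H$ be a separable Hilbert space. An adjoint pair $\{S,\widetilde S\}$ consists of densely defined closed operators $S,\widetilde S$ in $\mathfrak H$ with $(Sf,g)=(f,\widetilde Sg)$ for all $f\in\operatorname{dom}S$, $g\in\operatorname{dom}\widetilde S$. Fix operators $T\subset S^*$ and $\widetilde T\subset\widetilde S^*$ which are cores, i.e. $\overline T=S^*$ and $\overline{\widetilde T}=\widetilde S^*$. A triple $\{\mathcal G,(\Gamma_0,\Gamma_1),(\widetilde\Gamma_0,\widetilde\Gamma_1)\}$ for $\{S,\widetilde S\}$ consists of a Hilbert space $\mathcal G$ and linear maps $\Gamma_0,\Gamma_1:\operatorname{dom}T\to\mathcal G$, $\widetilde\Gamma_0,\widetilde\Gamma_1:\operatorname{dom}\widetilde T\to\mathcal G$. Put $A_0:=T\upharpoonright\ker\Gamma_0$ and $\widetilde A_0:=\widetilde T\upharpoonright\ker\widetilde\Gamma_0$. Conditions: (G) $(Tf,g)_{\mathfrak H}-(f,\widetilde Tg)_{\mathfrak H}=(\Gamma_1f,\widetilde\Gamma_0g)_{\mathcal G}-(\Gamma_0f,\widetilde\Gamma_1g)_{\mathcal G}$ for all $f\in\operatorname{dom}T$, $g\in\operatorname{dom}\widetilde T$; (D) $\operatorname{ran}\Gamma_0$ and $\operatorname{ran}\widetilde\Gamma_0$ are dense in $\mathcal G$; (M) $A_0^*=\widetilde A_0$ and $\widetilde A_0^*=A_0$ (so $\lambda\in\rho(A_0)$ iff $\overline\lambda\in\rho(\widetilde A_0)$). For $\lambda\in\rho(A_0)$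 one has $\operatorname{dom}T=\ker\Gamma_0\dotplus\ker(T-\lambda)$, so $\Gamma_0\upharpoonright\ker(T-\lambda)$ is injective; similarly for $\widetilde T$. The $\gamma$-fields are $\gamma(\lambda):=(\Gamma_0\upharpoonright\ker(T-\lambda))^{-1}$, $\widetilde\gamma(\mu):=(\widetilde\Gamma_0\upharpoonright\ker(\widetilde T-\mu))^{-1}$; the Weyl functions are $M(\lambda):=\Gamma_1\gamma(\lambda)$, $\lambda\in\rho(A_0)$, and $\widetilde M(\mu):=\widetilde\Gamma_1\widetilde\gamma(\mu)$, $\mu\in\rho(\widetilde A_0)$. Products of operators have their natural domains, e.g. $\operatorname{dom}(B_1B_2)=\{\varphi\in\operatorname{dom}B_2:B_2\varphi\in\operatorname{dom}B_1\}$. Define $A_{B_1B_2}f:=Tf$ on $\operatorname{dom}A_{B_1B_2}:=\{f\in\operatorname{dom}T:\Gamma_1f\in\operatorname{dom}(B_1B_2),\ B_1B_2\Gamma_1f=\Gamma_0f\}$ and $\widetilde A_{B_1'B_2'}g:=\widetilde Tg$ on $\operatorname{dom}\widetilde A_{B_1'B_2'}:=\{g\in\operatorname{dom}\widetilde T:\widetilde\Gamma_1g\in\operatorname{dom}(B_1'B_2'),\ B_1'B_2'\widetilde\Gamma_1g=\widetilde\Gamma_0g\}$. The resolvent set $\rho(A)$ consists of $\lambda$ such that $A-\lambda$ is bijective onto $\mathfrak H$ with bounded inverse. *)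

theory Defs
  imports "HOL-Analysis.Analysis"
begin

class chilbert = banach +
  fixes scaleC :: "complex \<Rightarrow> 'a \<Rightarrow> 'a"
    and cinner :: "'a \<Rightarrow> 'a \<Rightarrow> complex"
  assumes scaleC_add_right: "scaleC a (x + y) = scaleC a x + scaleC a y"
    and scaleC_add_left: "scaleC (a + b) x = scaleC a x + scaleC b x"
    and scaleC_scaleC: "scaleC a (scaleC b x) = scaleC (a * b) x"
    and scaleC_one: "scaleC 1 x = x"
    and scaleC_of_real: "scaleC (complex_of_real r) x = scaleR r x"
    and cinner_add_left: "cinner (x + y) z = cinner x z + cinner y z"
    and cinner_scaleC_left: "cinner (scaleC a x) y = a * cinner x y"
    and cinner_commute: "cinner x y = cnj (cinner y x)"
    and norm_cinner: "norm x = sqrt (Re (cinner x x))"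

text \<open>An (unbounded) operator from 'a to 'b is identified with its graph
G :: ('a \<times> 'b) set; dom = Domain G, ran = Range G.\<close>

definition lin_op :: "('a::chilbert \<times> 'b::chilbert) set \<Rightarrow> bool" where
  "lin_op G \<longleftrightarrow> (0, 0) \<in> G
     \<and> (\<forall>x y u v. (x, y) \<in> G \<longrightarrow> (u, v) \<in> G \<longrightarrow> (x + u, y + v) \<in> G)
     \<and> (\<forall>c x y. (x, y) \<in> G \<longrightarrow> (scaleC c x, scaleC c y) \<in> G)
     \<and> (\<forall>x y z. (x, y) \<in> G \<longrightarrow> (x, z) \<in> G \<longrightarrow> y = z)"

definition opapp :: "('a \<times> 'b) set \<Rightarrow> 'a \<Rightarrow> 'b" where
  "opapp G x = (THE y. (x, y) \<in> G)"

definition densely_defined :: "('a::topological_space \<times> 'b) set \<Rightarrow> bool" where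
  "densely_defined G \<longleftrightarrow> closure (Domain G) = UNIV"

text \<open>Adjoint (defined as a relation; single-valued when G is densely defined).\<close>
definition adj :: "('a::chilbert \<times> 'b::chilbert) set \<Rightarrow> ('b \<times> 'a) set" where
  "adj G = {(g, h). \<forall>f k. (f, k) \<in> G \<longrightarrow> cinner k g = cinner f h}"

text \<open>Product with natural domain: ocomp B1 B2 = B1 B2 (apply B2 first).\<close>
definition ocomp :: "('b \<times> 'c) set \<Rightarrow> ('a \<times> 'b) set \<Rightarrow> ('a \<times> 'c) set" where
  "ocomp B1 B2 = {(x, z). \<exists>y. (x, y) \<in> B2 \<and> (y, z) \<in> B1}"

definition shift :: "('a::chilbert \<times> 'a) set \<Rightarrow> complex \<Rightarrow> ('a \<times> 'a) set" where
  "shift A l = {(f, k - scaleC l f) | f k. (f, k) \<in> A}"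

definition idminus :: "('a::chilbert \<times> 'a) set \<Rightarrow> ('a \<times> 'a) set" where
  "idminus B = {(x, x - y) | x y. (x, y) \<in> B}"

definition resolvent_set :: "('a::chilbert \<times> 'a) set \<Rightarrow> complex set" where
  "resolvent_set A = {l. Range (shift A l) = UNIV
      \<and> (\<forall>f. (f, 0) \<in> shift A l \<longrightarrow> f = 0)
      \<and> (\<exists>C. \<forall>f k. (f, k) \<in> shift A l \<longrightarrow> norm f \<le> C * norm k)}"

definition clinear_on :: "'a::chilbert set \<Rightarrow> ('a \<Rightarrow> 'b::chilbert) \<Rightarrow> bool" where
  "clinear_on D F \<longleftrightarrow> (\<forall>x\<in>D. \<forall>y\<in>D. F (x + y) = F x + F y)
                     \<and> (\<forall>x\<in>D. \<forall>c. F (scaleC c x) = scaleC c (F x))"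

definition adjoint_pair :: "('a::chilbert \<times> 'a) set \<Rightarrow> ('a \<times> 'a) set \<Rightarrow> bool" where
  "adjoint_pair S S' \<longleftrightarrow> lin_op S \<and> lin_op S' \<and> densely_defined S \<and> densely_defined S'
     \<and> closed S \<and> closed S'
     \<and> (\<forall>f k g h. (f, k) \<in> S \<longrightarrow> (g, h) \<in> S' \<longrightarrow> cinner k g = cinner f h)"

text \<open>A_0 = T restricted to ker Gamma_0\<close>
definition restr_ker :: "('a \<times> 'a) set \<Rightarrow> ('a \<Rightarrow> 'b::zero) \<Rightarrow> ('a \<times> 'a) set" where
  "restr_ker T G0 = {(f, k). (f, k) \<in> T \<and> G0 f = 0}"

text \<open>gamma-field: gamma(l) = (Gamma_0 restricted to ker (T - l))^{-1}\<close>
definition gamma_field :: "('a::chilbert \<times> 'a) set \<Rightarrow> ('a \<Rightarrow> 'b) \<Rightarrow> complex \<Rightarrow> ('b \<times> 'a) set" where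
  "gamma_field T G0 l = {(G0 f, f) | f. (f, scaleC l f) \<in> T}"

text \<open>Weyl function M(l) = Gamma_1 gamma(l)\<close>
definition weyl :: "('a::chilbert \<times> 'a) set \<Rightarrow> ('a \<Rightarrow> 'b) \<Rightarrow> ('a \<Rightarrow> 'b) \<Rightarrow> complex \<Rightarrow> ('b \<times> 'b) set" where
  "weyl T G0 G1 l = {(G0 f, G1 f) | f. (f, scaleC l f) \<in> T}"

text \<open>A_{B1 B2} = T restricted to {f. Gamma_1 f \<in> dom(B1 B2), B1 B2 Gamma_1 f = Gamma_0 f}\<close>
definition ext_op :: "('a \<times> 'a) set \<Rightarrow> ('a \<Rightarrow> 'b) \<Rightarrow> ('a \<Rightarrow> 'b) \<Rightarrow> ('b \<times> 'b) set \<Rightarrow> ('b \<times> 'b) set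
    \<Rightarrow> ('a \<times> 'a) set" where
  "ext_op T G0 G1 B1 B2 = {(f, k). (f, k) \<in> T \<and> (G1 f, G0 f) \<in> ocomp B1 B2}"

end

theory Submission
  imports Defs
begin

lemma scaleC_zero_right[simp]: "scaleC a (0::'a::chilbert) = 0"
  using scaleC_add_right[of a "0::'a" 0] by simp

lemma scaleC_zero_left[simp]: "scaleC 0 (x::'a::chilbert) = 0"
  using scaleC_of_real[of 0 x] by simp

lemma scaleC_minus_right: "scaleC a (- x) = - scaleC a (x::'a::chilbert)"
proof -
  have "scaleC a x + scaleC a (- x) = 0" using scaleC_add_right[of a x "-x"] by simp
  thus ?thesis by (simp add: add_eq_0_iff2)
qed

lemma scaleC_diff_right: "scaleC a (x - y) = scaleC a x - scaleC a (y::'a::chilbert)"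
  by (metis diff_conv_add_uminus scaleC_add_right scaleC_minus_right)

lemma scaleC_minus_left: "scaleC (- a) x = - scaleC a (x::'a::chilbert)"
proof -
  have "scaleC a x + scaleC (-a) x = 0" using scaleC_add_left[of a "-a" x] by simp
  thus ?thesis by (simp add: add_eq_0_iff2)
qed

lemma scaleC_diff_left: "scaleC (a - b) x = scaleC a x - scaleC b (x::'a::chilbert)"
  by (metis diff_conv_add_uminus scaleC_add_left scaleC_minus_left)

lemma scaleC_minus1: "scaleC (-1) x = - (x::'a::chilbert)"
  by (simp add: scaleC_minus_left scaleC_one)

lemma cinner_zero_left[simp]: "cinner 0 (y::'a::chilbert) = 0"
  using cinner_add_left[of "0::'a" 0 y] by simp

lemma cinner_minus_left: "cinner (- x) y = - cinner x (y::'a::chilbert)"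
proof -
  have "cinner x y + cinner (-x) y = 0" using cinner_add_left[of x "-x" y] by simp
  thus ?thesis by (simp add: add_eq_0_iff2)
qed

lemma cinner_diff_left: "cinner (x - y) z = cinner x z - cinner y (z::'a::chilbert)"
  by (metis diff_conv_add_uminus cinner_add_left cinner_minus_left)

lemma cinner_add_right: "cinner x (y + z) = cinner x y + cinner x (z::'a::chilbert)"
proof -
  have "cinner x (y+z) = cnj (cinner (y+z) x)" by (rule cinner_commute)
  also have "\<dots> = cnj (cinner y x) + cnj (cinner z x)" by (simp add: cinner_add_left)
  also have "\<dots> = cinner x y + cinner x z" by (simp add: cinner_commute[of x y] cinner_commute[of x z])
  finally show ?thesis .
qed

lemma cinner_zero_right[simp]: "cinner x (0::'a::chilbert) = 0"
  using cinner_commute[of x 0] by simp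

lemma cinner_minus_right: "cinner x (- y) = - cinner x (y::'a::chilbert)"
proof -
  have "cinner x (- y) = cnj (cinner (-y) x)" by (rule cinner_commute)
  also have "\<dots> = - cinner x y" by (simp add: cinner_minus_left cinner_commute[of x y])
  finally show ?thesis .
qed

lemma cinner_diff_right: "cinner x (y - z) = cinner x y - cinner x (z::'a::chilbert)"
  by (metis diff_conv_add_uminus cinner_add_right cinner_minus_right)

lemma cinner_scaleC_right: "cinner x (scaleC a y) = cnj a * cinner x (y::'a::chilbert)"
proof -
  have "cinner x (scaleC a y) = cnj (cinner (scaleC a y) x)" by (rule cinner_commute)
  also have "\<dots> = cnj a * cinner x y" by (simp add: cinner_scaleC_left cinner_commute[of x y])
  finally show ?thesis .
qed

lemma cinner_scaleR_left: "cinner (scaleR r x) y = complex_of_real r * cinner x (y::'a::chilbert)"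
  unfolding scaleC_of_real[symmetric] cinner_scaleC_left ..

lemma cinner_scaleR_right: "cinner x (scaleR r y) = complex_of_real r * cinner x (y::'a::chilbert)"
  unfolding scaleC_of_real[symmetric] cinner_scaleC_right by simp

lemma cinner_self_real: "cinner x x = complex_of_real (Re (cinner x (x::'a::chilbert)))"
proof -
  have "Im (cinner x x) = - Im (cinner x x)" using arg_cong[OF cinner_commute[of x x], of Im] by simp
  hence "Im (cinner x x) = 0" by simp
  thus ?thesis by (simp add: complex_eq_iff)
qed

lemma Re_cinner_self: "Re (cinner x x) = (norm (x::'a::chilbert))\<^sup>2"
proof -
  have "0 \<le> Re (cinner x x)" using norm_ge_zero[of x] unfolding norm_cinner[of x] by simp
  thus ?thesis using norm_cinner[of x] by simp
qed

lemma cinner_self: "cinner x x = complex_of_real ((norm (x::'a::chilbert))\<^sup>2)"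
  using cinner_self_real Re_cinner_self by metis

lemma cinner_self_eq_0[simp]: "cinner x x = 0 \<longleftrightarrow> (x::'a::chilbert) = 0"
  by (simp add: cinner_self)

lemma norm_scaleC: "norm (scaleC a x) = cmod a * norm (x::'a::chilbert)"
proof -
  have "cinner (scaleC a x) (scaleC a x) = (a * cnj a) * cinner x x"
    by (simp add: cinner_scaleC_left cinner_scaleC_right)
  also have "\<dots> = complex_of_real ((cmod a * norm x)\<^sup>2)"
    unfolding complex_norm_square[symmetric] cinner_self by (simp add: power_mult_distrib)
  finally have "(norm (scaleC a x))\<^sup>2 = (cmod a * norm x)\<^sup>2"
    unfolding cinner_self of_real_eq_iff .
  thus ?thesis by (simp add: power2_eq_iff_nonneg)
qed

lemma expand_sq: "cinner (x - scaleC t y) (x - scaleC t y)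
   = cinner x x - cnj t * cinner x y - t * cinner y x + t * cnj t * cinner y (y::'a::chilbert)"
  unfolding cinner_diff_left cinner_diff_right cinner_scaleC_left cinner_scaleC_right
  by (simp add: ring_distribs mult.assoc)

lemma expand_sq_opt:
  fixes x y :: "'a::chilbert"
  assumes "y \<noteq> 0"
  shows "(norm (x - scaleC (cinner x y / complex_of_real ((norm y)\<^sup>2)) y))\<^sup>2
          = (norm x)\<^sup>2 - (cmod (cinner x y))\<^sup>2 / (norm y)\<^sup>2"
proof -
  define N where "N = (norm y)\<^sup>2"
  have N: "N > 0" using assms by (simp add: N_def)
  define w where "w = cinner x y"
  define t where "t = w / complex_of_real N"
  define q where "q = w * cnj w"
  have q: "q = complex_of_real ((cmod w)\<^sup>2)" unfolding q_def complex_norm_square ..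
  have c: "cinner y x = cnj w" unfolding w_def by (metis cinner_commute)
  have Nz: "complex_of_real N \<noteq> 0" using N by simp
  have 1: "cnj t * w = q / complex_of_real N" unfolding t_def q_def by simp
  have 2: "t * cnj w = q / complex_of_real N" unfolding t_def q_def by simp
  have 3: "t * cnj t * complex_of_real N = q / complex_of_real N"
    unfolding t_def q_def using Nz by (simp add: power2_eq_square)
  have "cinner (x - scaleC t y) (x - scaleC t y)
      = cinner x x - cnj t * w - t * cnj w + t * cnj t * complex_of_real N"
    using expand_sq[of x t y] unfolding c w_def[symmetric] cinner_self[of y] N_def[symmetric] .
  also have "\<dots> = cinner x x - q / complex_of_real N"
    unfolding 1 2 3 by simp
  also have "\<dots> = complex_of_real ((norm x)\<^sup>2 - (cmod w)\<^sup>2 / N)"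
    unfolding q cinner_self by simp
  finally have e: "cinner (x - scaleC t y) (x - scaleC t y)
      = complex_of_real ((norm x)\<^sup>2 - (cmod w)\<^sup>2 / N)" .
  show ?thesis using e unfolding cinner_self of_real_eq_iff by (simp add: t_def N_def w_def)
qed

lemma cauchy_schwarz: "cmod (cinner x y) \<le> norm x * norm (y::'a::chilbert)"
proof (cases "y = 0")
  case True thus ?thesis by simp
next
  case False
  have N: "(norm y)\<^sup>2 > 0" using False by simp
  have "0 \<le> (norm x)\<^sup>2 - (cmod (cinner x y))\<^sup>2 / (norm y)\<^sup>2"
    using expand_sq_opt[OF False, of x] by (metis zero_le_power2)
  hence "(cmod (cinner x y))\<^sup>2 / (norm y)\<^sup>2 \<le> (norm x)\<^sup>2" by simp
  hence "(cmod (cinner x y))\<^sup>2 \<le> (norm x)\<^sup>2 * (norm y)\<^sup>2" using N by (simp add: divide_le_eq)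
  hence "(cmod (cinner x y))\<^sup>2 \<le> (norm x * norm y)\<^sup>2" by (simp only: power_mult_distrib)
  thus ?thesis by (rule power2_le_imp_le) simp
qed

lemma tendsto_cinner_right:
  fixes g :: "_ \<Rightarrow> 'a::chilbert"
  assumes "(g \<longlongrightarrow> a) F" shows "((\<lambda>n. cinner k (g n)) \<longlongrightarrow> cinner k a) F"
proof -
  have "((\<lambda>n. g n - a) \<longlongrightarrow> 0) F" using assms by (rule LIM_zero)
  hence "((\<lambda>n. norm (g n - a)) \<longlongrightarrow> 0) F" by (rule tendsto_norm_zero)
  hence 1: "((\<lambda>n. norm k * norm (g n - a)) \<longlongrightarrow> 0) F" by (rule tendsto_mult_right_zero)
  have 2: "\<And>n. norm (cinner k (g n) - cinner k a) \<le> norm k * norm (g n - a)"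
    using cauchy_schwarz by (simp only: cinner_diff_right[symmetric])
  have "((\<lambda>n. cinner k (g n) - cinner k a) \<longlongrightarrow> 0) F"
    by (rule Lim_null_comparison[OF always_eventually 1]) (rule allI, rule 2)
  thus ?thesis by (rule LIM_zero_cancel)
qed

lemma tendsto_cinner_left:
  fixes g :: "_ \<Rightarrow> 'a::chilbert"
  assumes "(g \<longlongrightarrow> a) F" shows "((\<lambda>n. cinner (g n) k) \<longlongrightarrow> cinner a k) F"
proof -
  have "((\<lambda>n. cnj (cinner k (g n))) \<longlongrightarrow> cnj (cinner k a)) F"
    using tendsto_cinner_right[OF assms] by (rule tendsto_cnj)
  moreover have "(\<lambda>n. cnj (cinner k (g n))) = (\<lambda>n. cinner (g n) k)"
    by (rule ext, rule cinner_commute[symmetric])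
  moreover have "cnj (cinner k a) = cinner a k" by (rule cinner_commute[symmetric])
  ultimately show ?thesis by simp
qed

lemma lin_op_add: "lin_op G \<Longrightarrow> (x,y)\<in>G \<Longrightarrow> (u,v)\<in>G \<Longrightarrow> (x+u, y+v) \<in> G"
  unfolding lin_op_def by blast

lemma lin_op_scale: "lin_op G \<Longrightarrow> (x,y)\<in>G \<Longrightarrow> (scaleC c x, scaleC c y) \<in> G"
  unfolding lin_op_def by blast

lemma lin_op_zero: "lin_op G \<Longrightarrow> (0,0) \<in> G"
  unfolding lin_op_def by blast

lemma lin_op_fun: "lin_op G \<Longrightarrow> (x,y)\<in>G \<Longrightarrow> (x,z)\<in>G \<Longrightarrow> y = z"
  unfolding lin_op_def by blast

lemma lin_op_neg: "lin_op G \<Longrightarrow> (x,y)\<in>G \<Longrightarrow> (-x, -y) \<in> G"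
  using lin_op_scale[of G x y "-1"] by (simp add: scaleC_minus1)

lemma lin_op_diff: "lin_op G \<Longrightarrow> (x,y)\<in>G \<Longrightarrow> (u,v)\<in>G \<Longrightarrow> (x-u, y-v) \<in> G"
  using lin_op_add[of G x y "-u" "-v"] lin_op_neg[of G u v] by simp

lemma opapp_eq: "lin_op G \<Longrightarrow> (x,y)\<in>G \<Longrightarrow> opapp G x = y"
  unfolding opapp_def using lin_op_fun by blast

lemma adj_iff: "(g,h) \<in> adj G \<longleftrightarrow> (\<forall>f k. (f,k)\<in>G \<longrightarrow> cinner k g = cinner f h)"
  by (simp add: adj_def)

lemma adj_add: "(g,h) \<in> adj G \<Longrightarrow> (g',h') \<in> adj G \<Longrightarrow> (g+g', h+h') \<in> adj G"
  unfolding adj_iff by (simp add: cinner_add_right)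

lemma adj_scale: "(g,h) \<in> adj G \<Longrightarrow> (scaleC c g, scaleC c h) \<in> adj G"
  unfolding adj_iff by (simp add: cinner_scaleC_right)

lemma adj_diff: "(g,h) \<in> adj G \<Longrightarrow> (g',h') \<in> adj G \<Longrightarrow> (g-g', h-h') \<in> adj G"
  unfolding adj_iff by (simp add: cinner_diff_right)

lemma adj_zero: "(0,0) \<in> adj G"
  unfolding adj_iff by simp

lemma closed_adj: "closed (adj G)"
proof (unfold closed_sequential_limits, intro allI impI, elim conjE)
  fix p :: "nat \<Rightarrow> _" and q
  assume mem: "\<forall>n. p n \<in> adj G" and lim: "p \<longlonglongrightarrow> q"
  obtain g h where q: "q = (g,h)" by (cases q)
  have l1: "(\<lambda>n. fst (p n)) \<longlonglongrightarrow> g" using tendsto_fst[OF lim] q by simp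
  have l2: "(\<lambda>n. snd (p n)) \<longlonglongrightarrow> h" using tendsto_snd[OF lim] q by simp
  show "q \<in> adj G" unfolding q adj_iff
  proof (intro allI impI)
    fix f k assume fk: "(f,k) \<in> G"
    have e: "\<And>n. cinner k (fst (p n)) = cinner f (snd (p n))"
    proof -
      fix n
      have "(fst (p n), snd (p n)) \<in> adj G" using mem by simp
      thus "cinner k (fst (p n)) = cinner f (snd (p n))" using fk unfolding adj_iff by blast
    qed
    have a: "(\<lambda>n. cinner k (fst (p n))) \<longlonglongrightarrow> cinner k g" by (rule tendsto_cinner_right[OF l1])
    have b: "(\<lambda>n. cinner k (fst (p n))) \<longlonglongrightarrow> cinner f h"
      unfolding e by (rule tendsto_cinner_right[OF l2])
    show "cinner k g = cinner f h" using a b by (rule LIMSEQ_unique)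
  qed
qed

lemma ortho_dense_zero:
  fixes u :: "'a::chilbert"
  assumes "closure D = UNIV" "\<And>v. v \<in> D \<Longrightarrow> cinner v u = 0"
  shows "u = 0"
proof -
  have c: "closed {v. cinner v u = 0}"
  proof (unfold closed_sequential_limits, intro allI impI, elim conjE)
    fix p :: "nat \<Rightarrow> 'a" and q assume m: "\<forall>n. p n \<in> {v. cinner v u = 0}" and l: "p \<longlonglongrightarrow> q"
    have a: "(\<lambda>n. cinner (p n) u) \<longlonglongrightarrow> cinner q u" using l by (rule tendsto_cinner_left)
    have b: "(\<lambda>n. cinner (p n) u) = (\<lambda>n. 0)" using m by simp
    have "(\<lambda>n. 0) \<longlonglongrightarrow> cinner q u" using a unfolding b .
    hence "cinner q u = 0" using LIMSEQ_unique tendsto_const by blast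
    thus "q \<in> {v. cinner v u = 0}" by simp
  qed
  have "D \<subseteq> {v. cinner v u = 0}" using assms(2) by blast
  hence "closure D \<subseteq> {v. cinner v u = 0}" using c by (rule closure_minimal)
  hence "cinner u u = 0" using assms(1) by blast
  thus ?thesis by simp
qed

lemma parallelogram:
  fixes a b :: "'a::chilbert"
  shows "(norm (a+b))\<^sup>2 + (norm (a-b))\<^sup>2 = 2 * (norm a)\<^sup>2 + 2 * (norm b)\<^sup>2"
proof -
  have eq: "cinner (a+b) (a+b) + cinner (a-b) (a-b) = 2 * cinner a a + 2 * cinner b b"
    by (simp add: cinner_add_left cinner_add_right cinner_diff_left cinner_diff_right)
  have "Re (cinner (a+b) (a+b)) + Re (cinner (a-b) (a-b)) = 2 * Re (cinner a a) + 2 * Re (cinner b b)"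
    using arg_cong[OF eq, of Re] by simp
  thus ?thesis unfolding Re_cinner_self .
qed

lemma approx_sq:
  fixes d r \<eta> :: real
  assumes "0 \<le> d" "0 \<le> r" "0 < \<eta>" "r < d + min 1 (\<eta> / (2*d+1))"
  shows "r\<^sup>2 < d\<^sup>2 + \<eta>"
proof -
  define e where "e = min 1 (\<eta> / (2*d+1))"
  have e0: "0 < e" using assms by (simp add: e_def)
  have e1: "e \<le> 1" by (simp add: e_def)
  have "e \<le> \<eta> / (2*d+1)" by (simp add: e_def)
  hence e2: "e * (2*d+1) \<le> \<eta>" using assms by (simp add: pos_le_divide_eq)
  have "r\<^sup>2 < (d+e)\<^sup>2" using assms e0 by (intro power_strict_mono) (auto simp: e_def)
  also have "\<dots> = d\<^sup>2 + e*(2*d+e)" by (simp add: power2_eq_square algebra_simps)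
  also have "\<dots> \<le> d\<^sup>2 + e*(2*d+1)" using e0 e1 by (intro add_left_mono mult_left_mono) auto
  also have "\<dots> \<le> d\<^sup>2 + \<eta>" using e2 by simp
  finally show ?thesis .
qed

lemma closed_subspace_full:
  fixes V :: "'a::chilbert set"
  assumes cl: "closed V" and z: "0 \<in> V"
    and add: "\<And>a b. a \<in> V \<Longrightarrow> b \<in> V \<Longrightarrow> a + b \<in> V"
    and sc: "\<And>c a. a \<in> V \<Longrightarrow> scaleC c a \<in> V"
    and orth: "\<And>k. (\<forall>u\<in>V. cinner u k = 0) \<Longrightarrow> k = 0"
  shows "V = UNIV"
proof (intro set_eqI iffI)
  fix x :: 'a
  define S where "S = (\<lambda>v. norm (x - v)) ` V"
  define d where "d = Inf S"
  have Sne: "S \<noteq> {}" using z by (auto simp: S_def)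
  have Sbdd: "bdd_below S" unfolding S_def by (rule bdd_belowI[of _ 0]) auto
  have dle: "\<And>v. v \<in> V \<Longrightarrow> d \<le> norm (x - v)"
    unfolding d_def S_def by (rule cInf_lower) (use Sbdd S_def in auto)
  have d0: "0 \<le> d" unfolding d_def using Sne by (rule cInf_greatest) (auto simp: S_def)
  have approx: "\<exists>v\<in>V. (norm (x - v))\<^sup>2 < d\<^sup>2 + \<eta>" if "\<eta> > 0" for \<eta>
  proof -
    have "d < d + min 1 (\<eta> / (2*d+1))" using that d0 by simp
    then obtain s where "s \<in> S" "s < d + min 1 (\<eta> / (2*d+1))"
      using cInf_lessD[OF Sne] unfolding d_def by blast
    then obtain v where v: "v \<in> V" "norm (x - v) < d + min 1 (\<eta> / (2*d+1))" by (auto simp: S_def)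
    show ?thesis using approx_sq[OF d0 norm_ge_zero that v(2)] v(1) by blast
  qed
  have "\<forall>n. \<exists>v. v \<in> V \<and> (norm (x - v))\<^sup>2 < d\<^sup>2 + 1 / real (Suc n)"
  proof
    fix n :: nat
    have "1 / real (Suc n) > 0" by simp
    from approx[OF this] show "\<exists>v. v \<in> V \<and> (norm (x - v))\<^sup>2 < d\<^sup>2 + 1 / real (Suc n)" by blast
  qed
  then obtain v where vV: "\<And>n. v n \<in> V" and vn: "\<And>n. (norm (x - v n))\<^sup>2 < d\<^sup>2 + 1 / real (Suc n)"
    by metis
  have dist_sq: "(norm (v m - v n))\<^sup>2 \<le> 2 / real (Suc n) + 2 / real (Suc m)" for m n
  proof -
    define a where "a = x - v n"
    define b where "b = x - v m"
    define mid where "mid = scaleR (1/2) (v n + v m)"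
    have midV: "mid \<in> V" unfolding mid_def scaleC_of_real[symmetric] using vV add sc by blast
    have "scaleR 2 (x - mid) = scaleR 2 x - (v n + v m)" unfolding mid_def by (simp add: scaleR_right_diff_distrib)
    hence "a + b = scaleR 2 (x - mid)" unfolding a_def b_def by (simp add: scaleR_2 algebra_simps)
    hence ab: "norm (a+b) = 2 * norm (x - mid)" by simp
    have "2 * d \<le> norm (a+b)" unfolding ab using dle[OF midV] by simp
    hence "(2 * d)\<^sup>2 \<le> (norm (a+b))\<^sup>2" using d0 by (intro power_mono) auto
    hence "4 * d\<^sup>2 \<le> (norm (a+b))\<^sup>2" by (simp add: power_mult_distrib)
    moreover have "(norm (v m - v n))\<^sup>2 = 2 * (norm a)\<^sup>2 + 2 * (norm b)\<^sup>2 - (norm (a+b))\<^sup>2"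
    proof -
      have "a - b = v m - v n" unfolding a_def b_def by simp
      thus ?thesis using parallelogram[of a b] by simp
    qed
    moreover have "2 / real (Suc n) = 2 * (1 / real (Suc n))" "2 / real (Suc m) = 2 * (1 / real (Suc m))" by simp_all
    moreover have "(norm a)\<^sup>2 < d\<^sup>2 + 1 / real (Suc n)" using vn a_def by simp
    moreover have "(norm b)\<^sup>2 < d\<^sup>2 + 1 / real (Suc m)" using vn b_def by simp
    ultimately show ?thesis by linarith
  qed
  have cau: "Cauchy v"
  proof (rule metric_CauchyI)
    fix e :: real assume e: "0 < e"
    obtain M :: nat where M: "4 / e\<^sup>2 < real M" using reals_Archimedean2 by blast
    have "4 / real (Suc M) < e\<^sup>2"
    proof -
      have "4 < e\<^sup>2 * real M" using M e by (simp add: field_simps)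
      also have "\<dots> < e\<^sup>2 * real (Suc M)" using e by simp
      finally show ?thesis by (simp add: field_simps)
    qed
    show "\<exists>M. \<forall>m\<ge>M. \<forall>n\<ge>M. dist (v m) (v n) < e"
    proof (intro exI allI impI)
      fix m n assume mM: "M \<le> m" and nM: "M \<le> n"
      have "2 / real (Suc n) \<le> 2 / real (Suc M)" using nM by (simp add: frac_le)
      moreover have "2 / real (Suc m) \<le> 2 / real (Suc M)" using mM by (simp add: frac_le)
      ultimately have "(norm (v m - v n))\<^sup>2 < e\<^sup>2"
        using dist_sq[of m n] \<open>4 / real (Suc M) < e\<^sup>2\<close> by simp
      hence "norm (v m - v n) < e" using e by (simp add: power_less_imp_less_base)
      thus "dist (v m) (v n) < e" by (simp add: dist_norm)
    qed
  qed
  then obtain p where lim: "v \<longlonglongrightarrow> p" using Cauchy_convergent_iff convergent_def by blast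
  have pV: "p \<in> V" using cl vV lim closed_sequentially by blast
  have "(\<lambda>n. (norm (x - v n))\<^sup>2) \<longlonglongrightarrow> (norm (x - p))\<^sup>2"
    by (intro tendsto_intros lim)
  moreover have "(\<lambda>n. d\<^sup>2 + 1 / real (Suc n)) \<longlonglongrightarrow> d\<^sup>2 + 0"
    by (intro tendsto_intros LIMSEQ_inverse_real_of_nat[unfolded inverse_eq_divide])
  ultimately have "(norm (x - p))\<^sup>2 \<le> d\<^sup>2 + 0"
    by (rule LIMSEQ_le) (use vn less_imp_le in blast)
  hence xp: "(norm (x - p))\<^sup>2 \<le> d\<^sup>2" by simp
  define zz where "zz = x - p"
  have "\<forall>w\<in>V. cinner w zz = 0"
  proof
    fix w assume wV: "w \<in> V"
    show "cinner w zz = 0"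
    proof (cases "w = 0")
      case True thus ?thesis by simp
    next
      case False
      define t where "t = cinner zz w / complex_of_real ((norm w)\<^sup>2)"
      have "p + scaleC t w \<in> V" using add sc pV wV by blast
      hence "d \<le> norm (zz - scaleC t w)" using dle unfolding zz_def by (simp add: algebra_simps)
      hence "d\<^sup>2 \<le> (norm (zz - scaleC t w))\<^sup>2" using d0 by (simp add: power_mono)
      hence "(norm zz)\<^sup>2 \<le> (norm zz)\<^sup>2 - (cmod (cinner zz w))\<^sup>2 / (norm w)\<^sup>2"
        using xp expand_sq_opt[OF False, of zz] unfolding t_def zz_def by simp
      hence "(cmod (cinner zz w))\<^sup>2 / (norm w)\<^sup>2 \<le> 0" by simp
      hence "(cmod (cinner zz w))\<^sup>2 \<le> 0" using False by (simp add: divide_le_0_iff)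
      hence "cinner zz w = 0" by simp
      thus ?thesis using cinner_commute[of w zz] by simp
    qed
  qed
  hence "zz = 0" by (rule orth)
  thus "x \<in> V" using pV unfolding zz_def by simp
qed simp

lemma cont_cinner_norm: "continuous_on UNIV (\<lambda>x::'a::chilbert. cmod (cinner f x))"
  unfolding continuous_on_def
proof
  fix x :: 'a
  show "((\<lambda>x. cmod (cinner f x)) \<longlongrightarrow> cmod (cinner f x)) (at x within UNIV)"
    by (intro tendsto_norm tendsto_cinner_right tendsto_ident_at)
qed

lemma ubp:
  fixes P :: "'a::chilbert set"
  assumes pw: "\<And>x. \<exists>c. \<forall>f\<in>P. cmod (cinner f x) \<le> c"
  shows "\<exists>C. \<forall>f\<in>P. norm f \<le> C"
proof -
  define F where "F = (\<lambda>n::nat. {x. \<forall>f\<in>P. cmod (cinner f x) \<le> real n})"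
  have clF: "closed (F n)" for n
  proof -
    have "F n = (\<Inter>f\<in>P. {x. cmod (cinner f x) \<le> real n})" by (auto simp: F_def)
    moreover have "closed {x. cmod (cinner f x) \<le> real n}" for f
      by (rule closed_Collect_le[OF cont_cinner_norm continuous_on_const])
    ultimately show ?thesis by (auto intro!: closed_INT)
  qed
  have cov: "\<Union>(range F) = UNIV"
  proof (intro set_eqI iffI)
    fix x :: 'a
    obtain c where c: "\<forall>f\<in>P. cmod (cinner f x) \<le> c" using pw by blast
    obtain n :: nat where "c \<le> real n" using real_arch_simple by blast
    hence "x \<in> F n" using c by (auto simp: F_def)
    thus "x \<in> \<Union>(range F)" by blast
  qed simp
  have "\<exists>n. interior (F n) \<noteq> {}"
  proof (rule ccontr)
    assume "\<not> (\<exists>n. interior (F n) \<noteq> {})"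
    hence "euclidean interior_of \<Union>(range F) = {}"
      by (intro Baire_category_alt) (auto simp: completely_metrizable_space_euclidean clF closed_closedin[symmetric])
    thus False unfolding cov by simp
  qed
  then obtain n x0 where "x0 \<in> interior (F n)" by blast
  then obtain r where r: "r > 0" "ball x0 r \<subseteq> F n" by (auto simp: mem_interior)
  show ?thesis
  proof (intro exI ballI)
    fix f assume fP: "f \<in> P"
    show "norm f \<le> 4 * real n / r"
    proof (cases "f = 0")
      case True thus ?thesis using r by simp
    next
      case False
      define y where "y = scaleR (r / 2 / norm f) f"
      have ny: "norm y = r / 2" using False r by (simp add: y_def)
      have "x0 + y \<in> ball x0 r" using ny r by (simp add: dist_norm)
      hence "x0 + y \<in> F n" using r(2) by blast
      hence 1: "cmod (cinner f (x0 + y)) \<le> real n" using fP by (simp add: F_def)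
      have "x0 \<in> ball x0 r" using r by simp
      hence "x0 \<in> F n" using r(2) by blast
      hence 2: "cmod (cinner f x0) \<le> real n" using fP by (simp add: F_def)
      have "cinner f y = cinner f (x0 + y) - cinner f x0" by (simp add: cinner_add_right)
      hence "cmod (cinner f y) \<le> cmod (cinner f (x0 + y)) + cmod (cinner f x0)"
        by (metis norm_triangle_ineq4)
      hence 3: "cmod (cinner f y) \<le> 2 * real n" using 1 2 by simp
      have "cinner f y = complex_of_real (r / 2 / norm f * (norm f)\<^sup>2)"
        unfolding y_def cinner_scaleR_right cinner_self by simp
      also have "\<dots> = complex_of_real (r / 2 * norm f)" using False by (simp add: power2_eq_square)
      finally have "cinner f y = complex_of_real (r / 2 * norm f)" .
      hence "cmod (cinner f y) = \<bar>r / 2 * norm f\<bar>" by (simp only: norm_of_real)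
      hence "cmod (cinner f y) = r / 2 * norm f" using r by simp
      hence "r / 2 * norm f \<le> 2 * real n" using 3 by simp
      thus ?thesis using r by (simp add: field_simps)
    qed
  qed
qed

lemma shift_iff: "(f, w) \<in> shift A l \<longleftrightarrow> (\<exists>k. (f,k) \<in> A \<and> w = k - scaleC l f)"
  unfolding shift_def by blast

lemma range_shiftD:
  assumes "Range (shift A l) = UNIV" shows "\<exists>f k. (f,k) \<in> A \<and> k - scaleC l f = u"
proof -
  have "u \<in> Range (shift A l)" using assms by simp
  then obtain f where "(f,u) \<in> shift A l" by blast
  then obtain k where "(f,k) \<in> A" "u = k - scaleC l f" unfolding shift_iff by blast
  thus ?thesis by blast
qed

lemma tendsto_scaleC:
  fixes g :: "nat \<Rightarrow> 'a::chilbert"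
  assumes "g \<longlonglongrightarrow> a" shows "(\<lambda>n. scaleC c (g n)) \<longlonglongrightarrow> scaleC c a"
proof -
  have "((\<lambda>n. g n - a) \<longlongrightarrow> 0) sequentially" using assms by (rule LIM_zero)
  hence "((\<lambda>n. norm (g n - a)) \<longlongrightarrow> 0) sequentially" by (rule tendsto_norm_zero)
  hence 1: "((\<lambda>n. cmod c * norm (g n - a)) \<longlongrightarrow> 0) sequentially" by (rule tendsto_mult_right_zero)
  have 2: "\<And>n. norm (scaleC c (g n) - scaleC c a) \<le> cmod c * norm (g n - a)"
    by (simp add: scaleC_diff_right[symmetric] norm_scaleC)
  have "((\<lambda>n. scaleC c (g n) - scaleC c a) \<longlongrightarrow> 0) sequentially"
    by (rule Lim_null_comparison[OF always_eventually 1]) (rule allI, rule 2)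
  thus ?thesis by (rule LIM_zero_cancel)
qed

lemma rho_dual:
  fixes X Y :: "('a::chilbert \<times> 'a) set"
  assumes XY: "adj X = Y" and YX: "adj Y = X" and l: "l \<in> resolvent_set X"
  shows "Range (shift Y (cnj l)) = UNIV"
proof -
  have lr: "Range (shift X l) = UNIV \<and> (\<forall>f. (f, 0) \<in> shift X l \<longrightarrow> f = 0)
      \<and> (\<exists>C. \<forall>f k. (f, k) \<in> shift X l \<longrightarrow> norm f \<le> C * norm k)"
    using l unfolding resolvent_set_def by (rule CollectD)
  have surj: "Range (shift X l) = UNIV" using lr by (rule conjunct1)
  have inj: "\<And>f. (f, 0) \<in> shift X l \<Longrightarrow> f = 0" using lr by blast
  have "\<exists>C. \<forall>f k. (f, k) \<in> shift X l \<longrightarrow> norm f \<le> C * norm k"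
    using lr by (rule conjunct2[THEN conjunct2])
  then obtain C0 where C0': "\<forall>f k. (f, k) \<in> shift X l \<longrightarrow> norm f \<le> C0 * norm k" ..
  have C0: "\<And>f k. (f, k) \<in> shift X l \<Longrightarrow> norm f \<le> C0 * norm k" using C0' by simp
  define C where "C = max C0 0"
  have C: "\<And>f k. (f, k) \<in> X \<Longrightarrow> norm f \<le> C * norm (k - scaleC l f)"
  proof -
    fix f k assume "(f,k) \<in> X"
    hence "(f, k - scaleC l f) \<in> shift X l" unfolding shift_iff by blast
    hence "norm f \<le> C0 * norm (k - scaleC l f)" by (rule C0)
    also have "\<dots> \<le> C * norm (k - scaleC l f)" unfolding C_def by (intro mult_right_mono) auto
    finally show "norm f \<le> C * norm (k - scaleC l f)" .
  qed
  have C_nn: "C \<ge> 0" by (simp add: C_def)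
  define \<mu> where "\<mu> = cnj l"
  have below: "norm g \<le> C * norm (h - scaleC \<mu> g)" if gh: "(g,h) \<in> Y" for g h
  proof -
    obtain f k where fk: "(f,k) \<in> X" "k - scaleC l f = g" using range_shiftD[OF surj] by blast
    have a: "cinner k g = cinner f h" using gh fk(1) unfolding XY[symmetric] adj_iff by blast
    have "cinner (k - scaleC l f) g = cinner k g - l * cinner f g"
      by (simp only: cinner_diff_left cinner_scaleC_left)
    hence "cinner g g = cinner k g - l * cinner f g" unfolding fk(2) .
    also have "\<dots> = cinner f (h - scaleC \<mu> g)"
      unfolding a cinner_diff_right cinner_scaleC_right \<mu>_def by simp
    finally have e: "cinner g g = cinner f (h - scaleC \<mu> g)" .
    have "(norm g)\<^sup>2 = cmod (cinner g g)" unfolding cinner_self norm_of_real by simp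
    also have "\<dots> \<le> norm f * norm (h - scaleC \<mu> g)" unfolding e by (rule cauchy_schwarz)
    also have "\<dots> \<le> C * norm g * norm (h - scaleC \<mu> g)"
      using C[OF fk(1)] fk(2) by (intro mult_right_mono) auto
    finally have "norm g * norm g \<le> norm g * (C * norm (h - scaleC \<mu> g))"
      by (simp add: power2_eq_square mult_ac)
    show ?thesis
    proof (cases "g = 0")
      case True thus ?thesis using C_nn by simp
    next
      case False
      hence "0 < norm g" by simp
      thus ?thesis using \<open>norm g * norm g \<le> norm g * (C * norm (h - scaleC \<mu> g))\<close>
        by (simp add: mult_le_cancel_left_pos)
    qed
  qed
  define R where "R = Range (shift Y \<mu>)"
  have Rmem: "u \<in> R \<longleftrightarrow> (\<exists>g h. (g,h) \<in> Y \<and> u = h - scaleC \<mu> g)" for u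
    unfolding R_def shift_iff Range_iff by blast
  have Yclosed: "closed Y" unfolding XY[symmetric] by (rule closed_adj)
  have R0: "0 \<in> R" unfolding Rmem using adj_zero[of X] XY by (intro exI[of _ 0]) simp
  have Radd: "a + b \<in> R" if hab: "a \<in> R" "b \<in> R" for a b
  proof -
    obtain g h g' h' where gh: "(g,h) \<in> Y" "a = h - scaleC \<mu> g" "(g',h') \<in> Y" "b = h' - scaleC \<mu> g'"
      using hab unfolding Rmem by blast
    have "(g+g', h+h') \<in> Y" using adj_add[of g h X g' h'] XY gh by simp
    moreover have "a + b = (h+h') - scaleC \<mu> (g+g')" using gh by (simp add: scaleC_add_right)
    ultimately show ?thesis unfolding Rmem by blast
  qed
  have Rsc: "scaleC c a \<in> R" if ha: "a \<in> R" for a c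
  proof -
    obtain g h where gh: "(g,h) \<in> Y" "a = h - scaleC \<mu> g"
      using ha unfolding Rmem by blast
    have "(scaleC c g, scaleC c h) \<in> Y" using adj_scale[of g h X c] XY gh by simp
    moreover have "scaleC c a = scaleC c h - scaleC \<mu> (scaleC c g)"
      using gh by (simp add: scaleC_diff_right scaleC_scaleC mult.commute)
    ultimately show ?thesis unfolding Rmem by blast
  qed
  have Rorth: "k = 0" if hk: "\<forall>u\<in>R. cinner u k = 0" for k
  proof -
    have "(k, scaleC l k) \<in> adj Y" unfolding adj_iff
    proof (intro allI impI)
      fix g h assume gh: "(g,h) \<in> Y"
      have "h - scaleC \<mu> g \<in> R" unfolding Rmem using gh by blast
      hence "cinner (h - scaleC \<mu> g) k = 0" using hk by (rule bspec[rotated])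
      hence "cinner h k = \<mu> * cinner g k" by (simp add: cinner_diff_left cinner_scaleC_left)
      thus "cinner h k = cinner g (scaleC l k)" by (simp add: cinner_scaleC_right \<mu>_def)
    qed
    hence "(k, scaleC l k) \<in> X" using YX by simp
    hence "(k, 0) \<in> shift X l" unfolding shift_iff by auto
    thus "k = 0" by (rule inj)
  qed
  have Rclosed: "closed R"
  proof (unfold closed_sequential_limits, intro allI impI, elim conjE)
    fix u :: "nat \<Rightarrow> 'a" and v assume uR: "\<forall>n. u n \<in> R" and lim: "u \<longlonglongrightarrow> v"
    have ex: "\<forall>n. \<exists>gh. gh \<in> Y \<and> u n = snd gh - scaleC \<mu> (fst gh)"
    proof
      fix n
      obtain g h where "(g,h) \<in> Y" "u n = h - scaleC \<mu> g" using uR unfolding Rmem by blast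
      thus "\<exists>gh. gh \<in> Y \<and> u n = snd gh - scaleC \<mu> (fst gh)" by (intro exI[of _ "(g,h)"]) simp
    qed
    obtain p where "\<forall>n. p n \<in> Y \<and> u n = snd (p n) - scaleC \<mu> (fst (p n))"
      using choice[OF ex] by blast
    hence p: "\<And>n. p n \<in> Y" "\<And>n. u n = snd (p n) - scaleC \<mu> (fst (p n))" by auto
    define g where "g = (\<lambda>n. fst (p n))"
    define h where "h = (\<lambda>n. snd (p n))"
    have gh: "\<And>n. (g n, h n) \<in> Y" using p(1) by (simp add: g_def h_def)
    have u: "\<And>n. u n = h n - scaleC \<mu> (g n)" using p(2) by (simp add: g_def h_def)
    have ucau: "Cauchy u" using lim by (rule LIMSEQ_imp_Cauchy)
    have gdist: "norm (g m - g n) \<le> C * norm (u m - u n)" for m n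
    proof -
      have "(g m - g n, h m - h n) \<in> Y" using adj_diff[of "g m" "h m" X "g n" "h n"] gh XY by simp
      hence "norm (g m - g n) \<le> C * norm ((h m - h n) - scaleC \<mu> (g m - g n))" by (rule below)
      also have "(h m - h n) - scaleC \<mu> (g m - g n) = u m - u n"
        unfolding u scaleC_diff_right by (simp add: algebra_simps)
      finally show ?thesis .
    qed
    have "Cauchy g"
    proof (rule metric_CauchyI)
      fix e :: real assume e: "0 < e"
      have "e / (C + 1) > 0" using e C_nn by simp
      then obtain M where M: "\<forall>m\<ge>M. \<forall>n\<ge>M. dist (u m) (u n) < e / (C + 1)"
        using ucau unfolding Cauchy_def by blast
      show "\<exists>M. \<forall>m\<ge>M. \<forall>n\<ge>M. dist (g m) (g n) < e"
      proof (intro exI allI impI)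
        fix m n assume "M \<le> m" "M \<le> n"
        hence d: "norm (u m - u n) < e / (C + 1)" using M by (simp add: dist_norm)
        have "norm (g m - g n) \<le> C * norm (u m - u n)" by (rule gdist)
        also have "\<dots> \<le> (C + 1) * norm (u m - u n)" by (simp add: mult_right_mono)
        also have "\<dots> < (C + 1) * (e / (C + 1))" using d C_nn by (intro mult_strict_left_mono) auto
        also have "\<dots> = e" using C_nn by simp
        finally show "dist (g m) (g n) < e" by (simp add: dist_norm)
      qed
    qed
    hence "convergent g" by (simp add: Cauchy_convergent_iff)
    then obtain g0 where glim: "g \<longlonglongrightarrow> g0" unfolding convergent_def ..
    have hlim: "h \<longlonglongrightarrow> v + scaleC \<mu> g0"
    proof -
      have "(\<lambda>n. u n + scaleC \<mu> (g n)) \<longlonglongrightarrow> v + scaleC \<mu> g0"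
        by (intro tendsto_add lim tendsto_scaleC glim)
      moreover have "(\<lambda>n. u n + scaleC \<mu> (g n)) = h" by (rule ext) (simp add: u)
      ultimately show ?thesis by simp
    qed
    have "(\<lambda>n. (g n, h n)) \<longlonglongrightarrow> (g0, v + scaleC \<mu> g0)" by (intro tendsto_Pair glim hlim)
    hence "(g0, v + scaleC \<mu> g0) \<in> Y" by (rule closed_sequentially[OF Yclosed gh])
    moreover have "v = (v + scaleC \<mu> g0) - scaleC \<mu> g0" by simp
    ultimately show "v \<in> R" unfolding Rmem by blast
  qed
  have "R = UNIV" by (rule closed_subspace_full[OF Rclosed R0 Radd Rsc Rorth])
  thus ?thesis unfolding R_def \<mu>_def .
qed

lemma clin_add:
  assumes "clinear_on D G" "x \<in> D" "y \<in> D" shows "G (x + y) = G x + G y"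
  using assms unfolding clinear_on_def by blast

lemma clin_diff:
  assumes T: "lin_op T" and G: "clinear_on (Domain T) G" and x: "x \<in> Domain T" and y: "y \<in> Domain T"
  shows "G (x - y) = G x - G y"
proof -
  obtain k where "(y,k) \<in> T" using y by blast
  hence "(-y, -k) \<in> T" by (rule lin_op_neg[OF T])
  hence my: "-y \<in> Domain T" by blast
  have "G (-y) = G (scaleC (-1) y)" by (simp add: scaleC_minus1)
  also have "\<dots> = scaleC (-1) (G y)" using G y unfolding clinear_on_def by blast
  also have "\<dots> = - G y" by (simp add: scaleC_minus1)
  finally have "G (-y) = - G y" .
  moreover have "G (x + -y) = G x + G (-y)" using clin_add[OF G x my] .
  ultimately show ?thesis by simp
qed

lemma dense_gamma:
  assumes T: "lin_op T" and G0: "clinear_on (Domain T) G0"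
    and rng: "Range (shift (restr_ker T G0) l) = UNIV" and D: "closure (G0 ` Domain T) = UNIV"
  shows "closure (Domain (gamma_field T G0 l)) = UNIV"
proof -
  have "G0 ` Domain T \<subseteq> Domain (gamma_field T G0 l)"
  proof
    fix a assume "a \<in> G0 ` Domain T"
    then obtain f k where fk: "(f,k) \<in> T" "a = G0 f" by blast
    obtain h k' where hk: "(h,k') \<in> restr_ker T G0" "k' - scaleC l h = k - scaleC l f"
      using range_shiftD[OF rng] by blast
    have hT: "(h,k') \<in> T" and h0: "G0 h = 0" using hk(1) unfolding restr_ker_def by auto
    have "(f - h, k - k') \<in> T" using lin_op_diff[OF T fk(1) hT] .
    moreover have "k - k' = scaleC l (f - h)"
    proof -
      have "k - k' = scaleC l f - scaleC l h" using hk(2) by (simp add: algebra_simps)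
      thus ?thesis by (simp add: scaleC_diff_right)
    qed
    ultimately have 1: "(f - h, scaleC l (f - h)) \<in> T" by simp
    have "G0 (f - h) = G0 f - G0 h" using clin_diff[OF T G0] fk(1) hT by blast
    hence "G0 (f - h) = a" using h0 fk(2) by simp
    hence "(a, f - h) \<in> gamma_field T G0 l" using 1 unfolding gamma_field_def by blast
    thus "a \<in> Domain (gamma_field T G0 l)" by blast
  qed
  hence "closure (G0 ` Domain T) \<subseteq> closure (Domain (gamma_field T G0 l))" by (rule closure_mono)
  thus ?thesis using D by blast
qed

lemma gamma_unique:
  assumes D: "closure (Domain \<Gamma>) = UNIV" and 1: "(k, x) \<in> adj \<Gamma>" and 2: "(k, x') \<in> adj \<Gamma>"
  shows "x = (x'::'a::chilbert)"
proof -
  have "(k - k, x - x') \<in> adj \<Gamma>" using adj_diff[OF 1 2] .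
  hence a: "(0, x - x') \<in> adj \<Gamma>" by simp
  have "x - x' = 0"
  proof (rule ortho_dense_zero[OF D])
    fix v assume "v \<in> Domain \<Gamma>"
    then obtain w where "(v, w) \<in> \<Gamma>" by blast
    thus "cinner v (x - x') = 0" using a unfolding adj_iff by fastforce
  qed
  thus ?thesis by simp
qed

lemma green_swap:
  assumes G: "\<forall>f k g h. (f, k) \<in> T \<longrightarrow> (g, h) \<in> T' \<longrightarrow>
              cinner k g - cinner f h = cinner (G1 f) (G0' g) - cinner (G0 f) (G1' g)"
  shows "\<forall>g h f k. (g, h) \<in> T' \<longrightarrow> (f, k) \<in> T \<longrightarrow>
              cinner h f - cinner g k = cinner (G1' g) (G0 f) - cinner (G0' g) (G1 f)"
proof (intro allI impI)
  fix g h f k assume gh: "(g, h) \<in> T'" and fk: "(f, k) \<in> T"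
  have E: "cinner k g - cinner f h = cinner (G1 f) (G0' g) - cinner (G0 f) (G1' g)"
    using G gh fk by blast
  have E2: "cinner f h - cinner k g = cinner (G0 f) (G1' g) - cinner (G1 f) (G0' g)"
    using E by (simp add: algebra_simps)
  have "cnj (cinner f h) - cnj (cinner k g) = cnj (cinner (G0 f) (G1' g)) - cnj (cinner (G1 f) (G0' g))"
    using arg_cong[OF E2, of cnj] by (simp only: complex_cnj_diff)
  thus "cinner h f - cinner g k = cinner (G1' g) (G0 f) - cinner (G0' g) (G1 f)"
    by (simp only: cinner_commute[of h f] cinner_commute[of g k]
        cinner_commute[of "G1' g" "G0 f"] cinner_commute[of "G0' g" "G1 f"])
qed

lemma key_adj:
  assumes G: "\<forall>f k g h. (f, k) \<in> T \<longrightarrow> (g, h) \<in> T' \<longrightarrow>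
              cinner k g - cinner f h = cinner (G1 f) (G0' g) - cinner (G0 f) (G1' g)"
    and hk: "(h, kh) \<in> restr_ker T G0"
  shows "(kh - scaleC l h, G1 h) \<in> adj (gamma_field T' G0' (cnj l))"
  unfolding adj_iff
proof (intro allI impI)
  fix a b assume "(a, b) \<in> gamma_field T' G0' (cnj l)"
  then obtain g where g: "a = G0' g" "b = g" "(g, scaleC (cnj l) g) \<in> T'"
    unfolding gamma_field_def by blast
  have hT: "(h, kh) \<in> T" and h0: "G0 h = 0" using hk unfolding restr_ker_def by auto
  have "cinner kh g - cinner h (scaleC (cnj l) g) = cinner (G1 h) (G0' g) - cinner (G0 h) (G1' g)"
    using G hT g(3) by blast
  hence "cinner (kh - scaleC l h) g = cinner (G1 h) (G0' g)"
    using h0 by (simp add: cinner_diff_left cinner_scaleC_left cinner_scaleC_right)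
  hence "cnj (cinner (kh - scaleC l h) g) = cnj (cinner (G1 h) (G0' g))" by simp
  thus "cinner b (kh - scaleC l h) = cinner a (G1 h)"
    unfolding g(1,2) by (simp add: cinner_commute[of "kh - scaleC l h" g] cinner_commute[of "G1 h" "G0' g"])
qed

lemma surj_ext:
  fixes T T' :: "('h::chilbert \<times> 'h) set" and G0 G1 G0' G1' :: "'h \<Rightarrow> 'g::chilbert"
    and B1 B2 :: "('g \<times> 'g) set"
  assumes T: "lin_op T" and lin0: "clinear_on (Domain T) G0" and lin1: "clinear_on (Domain T) G1"
    and G: "\<forall>f k g h. (f, k) \<in> T \<longrightarrow> (g, h) \<in> T' \<longrightarrow>
              cinner k g - cinner f h = cinner (G1 f) (G0' g) - cinner (G0 f) (G1' g)"
    and dense: "closure (Domain (gamma_field T' G0' (cnj l))) = UNIV"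
    and rng: "Range (shift (restr_ker T G0) l) = UNIV"
    and B2: "lin_op B2"
    and hyp: "\<forall>f. \<exists>x. (f, x) \<in> adj (gamma_field T' G0' (cnj l)) \<and> x \<in> Domain B2
                 \<and> opapp B2 x \<in> Range (idminus (ocomp B2 (ocomp (weyl T G0 G1 l) B1)))"
  shows "Range (shift (ext_op T G0 G1 B1 B2) l) = UNIV"
proof (intro set_eqI iffI)
  fix k :: 'h
  obtain h kh where hk: "(h,kh) \<in> restr_ker T G0" "kh - scaleC l h = k"
    using range_shiftD[OF rng] by blast
  have hT: "(h, kh) \<in> T" and h0: "G0 h = 0" using hk(1) unfolding restr_ker_def by auto
  obtain x where x1: "(k, x) \<in> adj (gamma_field T' G0' (cnj l))" and x2: "x \<in> Domain B2"
      and x3: "opapp B2 x \<in> Range (idminus (ocomp B2 (ocomp (weyl T G0 G1 l) B1)))"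
    using hyp by blast
  have "(k, G1 h) \<in> adj (gamma_field T' G0' (cnj l))" using key_adj[OF G hk(1), of l] hk(2) by simp
  hence xe: "x = G1 h" using gamma_unique[OF dense x1] by simp
  obtain b where xb: "(x, b) \<in> B2" using x2 by blast
  hence "opapp B2 x = b" by (rule opapp_eq[OF B2])
  with x3 obtain \<phi> where "(\<phi>, b) \<in> idminus (ocomp B2 (ocomp (weyl T G0 G1 l) B1))" by blast
  then obtain z where z: "b = \<phi> - z" "(\<phi>, z) \<in> ocomp B2 (ocomp (weyl T G0 G1 l) B1)"
    unfolding idminus_def by blast
  then obtain y where y: "(\<phi>, y) \<in> ocomp (weyl T G0 G1 l) B1" "(y, z) \<in> B2"
    unfolding ocomp_def by blast
  then obtain w where w: "(\<phi>, w) \<in> B1" "(w, y) \<in> weyl T G0 G1 l"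
    unfolding ocomp_def by blast
  then obtain f1 where f1: "w = G0 f1" "y = G1 f1" "(f1, scaleC l f1) \<in> T"
    unfolding weyl_def by blast
  define f where "f = h + f1"
  define kf where "kf = kh + scaleC l f1"
  have fT: "(f, kf) \<in> T" unfolding f_def kf_def by (rule lin_op_add[OF T hT f1(3)])
  have dh: "h \<in> Domain T" using hT by blast
  have df1: "f1 \<in> Domain T" using f1(3) by blast
  have G0f: "G0 f = w" unfolding f_def using clin_add[OF lin0 dh df1] h0 f1(1) by simp
  have G1f: "G1 f = x + y" unfolding f_def using clin_add[OF lin1 dh df1] xe f1(2) by simp
  have "(x + y, b + z) \<in> B2" by (rule lin_op_add[OF B2 xb y(2)])
  hence "(x + y, \<phi>) \<in> B2" using z(1) by simp
  hence "(G1 f, G0 f) \<in> ocomp B1 B2" unfolding G0f G1f ocomp_def using w(1) by blast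
  hence fA: "(f, kf) \<in> ext_op T G0 G1 B1 B2" unfolding ext_op_def using fT by blast
  have "kf - scaleC l f = kh - scaleC l h" unfolding f_def kf_def by (simp add: scaleC_add_right)
  hence "kf - scaleC l f = k" using hk(2) by simp
  hence "(f, k) \<in> shift (ext_op T G0 G1 B1 B2) l" unfolding shift_iff using fA by blast
  thus "k \<in> Range (shift (ext_op T G0 G1 B1 B2) l)" by blast
qed simp

theorem theorem4p6:
  fixes S S' T T' :: "('h::chilbert \<times> 'h) set"
    and G0 G1 G0' G1' :: "'h \<Rightarrow> 'g::chilbert"
    and B1 B2 B1' B2' :: "('g \<times> 'g) set"
    and l :: complex
  assumes separable: "\<exists>D :: 'h set. countable D \<and> closure D = UNIV"
    and pair: "adjoint_pair S S'"
    and T_op: "lin_op T" and T'_op: "lin_op T'"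
    and T_sub: "T \<subseteq> adj S" and T'_sub: "T' \<subseteq> adj S'"
    and T_core: "closure T = adj S" and T'_core: "closure T' = adj S'"
    and lin: "clinear_on (Domain T) G0" "clinear_on (Domain T) G1"
             "clinear_on (Domain T') G0'" "clinear_on (Domain T') G1'"
    and G: "\<forall>f k g h. (f, k) \<in> T \<longrightarrow> (g, h) \<in> T' \<longrightarrow>
              cinner k g - cinner f h = cinner (G1 f) (G0' g) - cinner (G0 f) (G1' g)"
    and D: "closure (G0 ` Domain T) = UNIV" "closure (G0' ` Domain T') = UNIV"
    and M: "adj (restr_ker T G0) = restr_ker T' G0'" "adj (restr_ker T' G0') = restr_ker T G0"
    and rho_ne: "resolvent_set (restr_ker T G0) \<noteq> {}"
    and B_ops: "lin_op B1" "lin_op B2" "lin_op B1'" "lin_op B2'"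
    and B_adj: "\<forall>\<phi> a \<psi> b. (\<phi>, a) \<in> ocomp B1 B2 \<longrightarrow> (\<psi>, b) \<in> ocomp B1' B2' \<longrightarrow>
                  cinner a \<psi> = cinner \<phi> b"
    and l_rho: "l \<in> resolvent_set (restr_ker T G0)"
    and hyp1: "\<forall>f. \<exists>x. (f, x) \<in> adj (gamma_field T' G0' (cnj l)) \<and> x \<in> Domain B2
                 \<and> opapp B2 x \<in> Range (idminus (ocomp B2 (ocomp (weyl T G0 G1 l) B1)))"
    and hyp2: "\<forall>g. \<exists>x. (g, x) \<in> adj (gamma_field T G0 l) \<and> x \<in> Domain B2'
                 \<and> opapp B2' x \<in> Range (idminus (ocomp B2' (ocomp (weyl T' G0' G1' (cnj l)) B1')))"
  shows "ext_op T G0 G1 B1 B2 = adj (ext_op T' G0' G1' B1' B2')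
         \<and> closed (ext_op T G0 G1 B1 B2)
         \<and> l \<in> resolvent_set (ext_op T G0 G1 B1 B2)"
proof -
  define A where "A = ext_op T G0 G1 B1 B2"
  define At where "At = ext_op T' G0' G1' B1' B2'"
  have "Range (shift (restr_ker T G0) l) = UNIV \<and> (\<forall>f. (f, 0) \<in> shift (restr_ker T G0) l \<longrightarrow> f = 0)
      \<and> (\<exists>C. \<forall>f k. (f, k) \<in> shift (restr_ker T G0) l \<longrightarrow> norm f \<le> C * norm k)"
    using l_rho unfolding resolvent_set_def by (rule CollectD)
  hence rng: "Range (shift (restr_ker T G0) l) = UNIV" by (rule conjunct1)
  have rt: "Range (shift (restr_ker T' G0') (cnj l)) = UNIV" by (rule rho_dual[OF M(1) M(2) l_rho])
  have d1: "closure (Domain (gamma_field T G0 l)) = UNIV" by (rule dense_gamma[OF T_op lin(1) rng D(1)])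
  have d2: "closure (Domain (gamma_field T' G0' (cnj l))) = UNIV"
    by (rule dense_gamma[OF T'_op lin(3) rt D(2)])
  have sA: "Range (shift A l) = UNIV" unfolding A_def
    by (rule surj_ext[OF T_op lin(1) lin(2) G d2 rng B_ops(2) hyp1])
  have d1': "closure (Domain (gamma_field T G0 (cnj (cnj l)))) = UNIV" using d1 by simp
  have hyp2': "\<forall>g. \<exists>x. (g, x) \<in> adj (gamma_field T G0 (cnj (cnj l))) \<and> x \<in> Domain B2'
                 \<and> opapp B2' x \<in> Range (idminus (ocomp B2' (ocomp (weyl T' G0' G1' (cnj l)) B1')))"
    using hyp2 by simp
  have sAt: "Range (shift At (cnj l)) = UNIV" unfolding At_def
    by (rule surj_ext[OF T'_op lin(3) lin(4) green_swap[OF G] d1' rt B_ops(4) hyp2'])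
  have sub: "A \<subseteq> adj At"
  proof
    fix p assume "p \<in> A"
    then obtain f k where p: "p = (f,k)" and fT: "(f,k) \<in> T" and fB: "(G1 f, G0 f) \<in> ocomp B1 B2"
      unfolding A_def ext_op_def by blast
    have "(f,k) \<in> adj At" unfolding adj_iff
    proof (intro allI impI)
      fix g h assume "(g,h) \<in> At"
      hence gT: "(g,h) \<in> T'" and gB: "(G1' g, G0' g) \<in> ocomp B1' B2'"
        unfolding At_def ext_op_def by auto
      have b: "cinner (G0 f) (G1' g) = cinner (G1 f) (G0' g)" using B_adj fB gB by blast
      have "cinner k g - cinner f h = cinner (G1 f) (G0' g) - cinner (G0 f) (G1' g)"
        using G fT gT by blast
      hence "cinner k g = cinner f h" unfolding b by simp
      hence "cnj (cinner k g) = cnj (cinner f h)" by simp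
      thus "cinner h f = cinner g k" by (simp only: cinner_commute[of h f] cinner_commute[of g k])
    qed
    thus "p \<in> adj At" unfolding p .
  qed
  have inj: "a = 0" if ha: "(a, scaleC l a) \<in> adj At" for a
  proof -
    have "cinner u a = 0" for u
    proof -
      obtain g h where gh: "(g,h) \<in> At" "h - scaleC (cnj l) g = u" using range_shiftD[OF sAt] by blast
      have "cinner h a = cinner g (scaleC l a)" using ha gh(1) unfolding adj_iff by blast
      hence "cinner h a = cnj l * cinner g a" by (simp add: cinner_scaleC_right)
      hence "cinner (h - scaleC (cnj l) g) a = 0" by (simp add: cinner_diff_left cinner_scaleC_left)
      thus ?thesis using gh(2) by simp
    qed
    hence "cinner a a = 0" by blast
    thus "a = 0" by simp
  qed
  have eq: "A = adj At"
  proof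
    show "A \<subseteq> adj At" by (rule sub)
    show "adj At \<subseteq> A"
    proof
      fix p assume "p \<in> adj At"
      then obtain a b where p: "p = (a,b)" and ab: "(a,b) \<in> adj At" by (cases p) auto
      obtain f k where fk: "(f,k) \<in> A" "k - scaleC l f = b - scaleC l a" using range_shiftD[OF sA] by blast
      have "(f,k) \<in> adj At" using sub fk(1) by blast
      hence d: "(a - f, b - k) \<in> adj At" using adj_diff[OF ab] by blast
      have "b - k = scaleC l a - scaleC l f" using fk(2) by (simp add: algebra_simps)
      hence "b - k = scaleC l (a - f)" by (simp add: scaleC_diff_right)
      hence "(a - f, scaleC l (a - f)) \<in> adj At" using d by simp
      hence "a - f = 0" by (rule inj)
      hence af: "a = f" by simp
      hence "b = k" using fk(2) by simp
      thus "p \<in> A" using af fk(1) p by simp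
    qed
  qed
  have cl: "closed A" unfolding eq by (rule closed_adj)
  have injA: "f = 0" if hf: "(f, 0) \<in> shift A l" for f
  proof -
    obtain k where "(f,k) \<in> A" "0 = k - scaleC l f" using hf unfolding shift_iff by blast
    hence "(f, scaleC l f) \<in> adj At" using eq by simp
    thus ?thesis by (rule inj)
  qed
  define P where "P = {f. \<exists>k. (f,k) \<in> A \<and> norm (k - scaleC l f) \<le> 1}"
  have pw: "\<exists>c. \<forall>f\<in>P. cmod (cinner f x) \<le> c" for x
  proof -
    obtain y ky where y: "(y,ky) \<in> At" "ky - scaleC (cnj l) y = x" using range_shiftD[OF sAt] by blast
    show ?thesis
    proof (intro exI ballI)
      fix f assume "f \<in> P"
      then obtain k where fk: "(f,k) \<in> A" "norm (k - scaleC l f) \<le> 1" unfolding P_def by blast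
      have "(f,k) \<in> adj At" using eq fk(1) by simp
      hence "cinner ky f = cinner y k" using y(1) unfolding adj_iff by blast
      hence e1: "cinner f ky = cinner k y" by (metis cinner_commute)
      have "cinner f x = cinner f ky - l * cinner f y"
        unfolding y(2)[symmetric] by (simp add: cinner_diff_right cinner_scaleC_right)
      also have "\<dots> = cinner (k - scaleC l f) y" unfolding e1 by (simp add: cinner_diff_left cinner_scaleC_left)
      finally have "cmod (cinner f x) \<le> norm (k - scaleC l f) * norm y" using cauchy_schwarz by simp
      also have "\<dots> \<le> 1 * norm y" using fk(2) by (intro mult_right_mono) auto
      finally show "cmod (cinner f x) \<le> norm y" by simp
    qed
  qed
  obtain C where C: "\<forall>f\<in>P. norm f \<le> C" using ubp[OF pw] by blast
  have bound: "norm f \<le> C * norm w" if hfw: "(f, w) \<in> shift A l" for f w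
  proof -
    obtain k where fk: "(f,k) \<in> A" "w = k - scaleC l f" using hfw unfolding shift_iff by blast
    show ?thesis
    proof (cases "w = 0")
      case True
      hence "(f, 0) \<in> shift A l" using hfw by simp
      hence "f = 0" by (rule injA)
      thus ?thesis using True by simp
    next
      case False
      define c where "c = complex_of_real (1 / norm w)"
      have cm: "cmod c = 1 / norm w" unfolding c_def norm_of_real by simp
      have "(scaleC c f, scaleC c k) \<in> A" using adj_scale[of f k At c] fk(1) eq by simp
      moreover have "scaleC c k - scaleC l (scaleC c f) = scaleC c w"
        unfolding fk(2) by (simp add: scaleC_diff_right scaleC_scaleC mult.commute)
      moreover have "norm (scaleC c w) = 1" using False by (simp add: norm_scaleC cm)
      ultimately have "scaleC c f \<in> P" unfolding P_def by auto
      hence "norm (scaleC c f) \<le> C" using C by blast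
      hence "norm f / norm w \<le> C" by (simp add: norm_scaleC cm)
      thus ?thesis using False by (simp add: divide_le_eq mult.commute)
    qed
  qed
  have res: "l \<in> resolvent_set A"
    unfolding resolvent_set_def using sA injA bound by blast
  show ?thesis using eq cl res unfolding A_def At_def by blast
qed

end
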